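(* The cluster numbers $s_{n,k}$ for the consecutive pattern $14523$ satisfy the recurrence \[s_{n,k} = \sum_{\ell:\ 5 \leq 3\ell+2 \leq n} \binom{n-\ell-2}{2\ell}\,(2\ell-1)!!\; s_{n-3\ell-1,\,k-\ell} \quad \text{for } n\geq 5,\] with the initial conditions $s_{n,k}=0$ for $n<5$, except $s_{1,0}=1$.
   Context: For a consecutive pattern $\sigma$ of length $m$ (here $\sigma=14523$, $m=5$): an occurrence of $\sigma$ in a permutation is a block of $m$ consecutive positions whose entries are in the same relative order as $\sigma$. A $k$-cluster of length $n\ge m$ is a permutation of $\{1,\dots,n\}$ containing precisely $k$ occurrences of $\sigma$, such that every entry belongs to at least one occurrence and any two successive occurrences overlap in at least one position. $s_{n,k}$ is the number of $k$-clusters of length $n$. $(2\ell-1)!!=1\cdot3\cdot5\cdots(2\ell-1)$. *)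

theory Defs
  imports Main
begin

definition sigma :: "nat list" where
  "sigma = [1, 4, 5, 2, 3]"

text \<open>A permutation of {1..n} is represented as a list p of length n
  (entry at position j is p ! j, positions 0-based).\<close>
definition is_perm :: "nat \<Rightarrow> nat list \<Rightarrow> bool" where
  "is_perm n p \<longleftrightarrow> length p = n \<and> distinct p \<and> set p = {1..n}"

definition occ_at :: "nat list \<Rightarrow> nat \<Rightarrow> bool" where
  "occ_at p i \<longleftrightarrow> i + length sigma \<le> length p \<and>
     (\<forall>a < length sigma. \<forall>b < length sigma.
        (p ! (i + a) < p ! (i + b)) \<longleftrightarrow> (sigma ! a < sigma ! b))"

definition occs :: "nat list \<Rightarrow> nat set" where
  "occs p = {i. occ_at p i}"

definition is_cluster :: "nat \<Rightarrow> nat \<Rightarrow> nat list \<Rightarrow> bool" where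
  "is_cluster n k p \<longleftrightarrow>
     n \<ge> length sigma \<and> is_perm n p \<and> card (occs p) = k \<and>
     (\<forall>j < n. \<exists>i \<in> occs p. i \<le> j \<and> j < i + length sigma) \<and>
     (\<forall>i \<in> occs p. \<forall>i' \<in> occs p.
        i < i' \<and> (\<forall>t. i < t \<and> t < i' \<longrightarrow> t \<notin> occs p) \<longrightarrow> i' < i + length sigma)"

definition s :: "nat \<Rightarrow> nat \<Rightarrow> nat" where
  "s n k = (if n = 1 \<and> k = 0 then 1 else card {p. is_cluster n k p})"

definition dfact_odd :: "nat \<Rightarrow> nat" where
  "dfact_odd l = (\<Prod>i<l. 2 * i + 1)"

end

theory Submission
  imports Defs
begin


definition occ0 :: "nat list \<Rightarrow> bool" where
  "occ0 q \<longleftrightarrow> 5 \<le> length q \<and> q!0 < q!3 \<and> q!3 < q!4 \<and> q!4 < q!1 \<and> q!1 < q!2"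

lemma occ_iff:
  "occ_at p i \<longleftrightarrow> i + 5 \<le> length p \<and> p!i < p!(i+3) \<and> p!(i+3) < p!(i+4)
     \<and> p!(i+4) < p!(i+1) \<and> p!(i+1) < p!(i+2)"
proof
  assume h: "occ_at p i"
  have L: "i + 5 \<le> length p" using h by (simp add: occ_at_def sigma_def)
  have R: "\<And>a b. a < 5 \<Longrightarrow> b < 5 \<Longrightarrow> (p ! (i + a) < p ! (i + b)) = ([1::nat,4,5,2,3] ! a < [1::nat,4,5,2,3] ! b)"
    using h by (simp add: occ_at_def sigma_def)
  show "i + 5 \<le> length p \<and> p!i < p!(i+3) \<and> p!(i+3) < p!(i+4)
     \<and> p!(i+4) < p!(i+1) \<and> p!(i+1) < p!(i+2)"
    using L R[of 0 3] R[of 3 4] R[of 4 1] R[of 1 2] by simp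
next
  assume h: "i + 5 \<le> length p \<and> p!i < p!(i+3) \<and> p!(i+3) < p!(i+4)
     \<and> p!(i+4) < p!(i+1) \<and> p!(i+1) < p!(i+2)"
  then show "occ_at p i"
    unfolding occ_at_def sigma_def
    by (auto simp: numeral_eq_Suc All_less_Suc)
qed

lemma occ_occ0: "occ_at p i \<longleftrightarrow> occ0 (drop i p)"
proof (cases "i \<le> length p")
  case True
  then show ?thesis unfolding occ_iff occ0_def by (auto simp add: nth_drop)
next
  case False
  then show ?thesis unfolding occ_iff occ0_def by simp
qed

lemma occ_drop: "occ_at (drop d p) i \<longleftrightarrow> occ_at p (i + d)"
  by (simp add: occ_occ0)

lemma occ0_not1: assumes "occ0 q" shows "\<not> occ0 (drop 1 q)"
  using assms unfolding occ0_def by (auto simp: nth_drop)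

lemma occ0_not2: assumes "occ0 q" shows "\<not> occ0 (drop 2 q)"
  using assms unfolding occ0_def by (auto simp: nth_drop)

lemma occ_not1: assumes "occ_at p i" shows "\<not> occ_at p (Suc i)"
  using occ0_not1[of "drop i p"] assms by (simp add: occ_occ0)

lemma occ_not2: assumes "occ_at p i" shows "\<not> occ_at p (Suc (Suc i))"
  using occ0_not2[of "drop i p"] assms by (simp add: occ_occ0)


lemma occ_len: "occ_at p i \<Longrightarrow> i + 5 \<le> length p"
  by (simp add: occ_iff)

lemma finite_occs: "finite (occs p)"
proof -
  have "occs p \<subseteq> {..<length p}" using occ_len by (fastforce simp: occs_def)
  then show ?thesis using finite_subset by blast
qed

lemma occs_drop: "i \<in> occs (drop d p) \<longleftrightarrow> i + d \<in> occs p"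
  by (simp add: occs_def occ_drop)

inductive chain :: "nat list \<Rightarrow> nat \<Rightarrow> bool" where
  c1: "length p = 5 \<Longrightarrow> occ_at p 0 \<Longrightarrow> chain p 1"
| c3: "occ_at p 0 \<Longrightarrow> chain (drop 3 p) k \<Longrightarrow> chain p (Suc k)"
| c4: "occ_at p 0 \<Longrightarrow> chain (drop 4 p) k \<Longrightarrow> chain p (Suc k)"

definition clw :: "nat \<Rightarrow> nat list \<Rightarrow> bool" where
  "clw k p \<longleftrightarrow> 5 \<le> length p \<and> card (occs p) = k \<and>
     (\<forall>j < length p. \<exists>i \<in> occs p. i \<le> j \<and> j < i + 5) \<and>
     (\<forall>i \<in> occs p. \<forall>i' \<in> occs p.
        i < i' \<and> (\<forall>t. i < t \<and> t < i' \<longrightarrow> t \<notin> occs p) \<longrightarrow> i' < i + 5)"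

lemma is_cluster_clw: "is_cluster n k p \<longleftrightarrow> is_perm n p \<and> clw k p"
proof -
  have "length sigma = 5" by (simp add: sigma_def)
  then show ?thesis unfolding is_cluster_def clw_def is_perm_def by auto
qed

lemma clw_occ0: "clw k p \<Longrightarrow> 0 \<in> occs p"
  unfolding clw_def by force

lemma clw_shift:
  assumes o: "occ_at p 0" and c: "clw k (drop d p)" and d: "d = 3 \<or> d = 4"
  shows "clw (Suc k) p"
proof -
  have dp: "d \<in> occs p" using clw_occ0[OF c] occs_drop[of 0 d p] by simp
  have E: "occs p = insert 0 ((\<lambda>i. i + d) ` occs (drop d p))"
  proof (rule set_eqI)
    fix i
    show "i \<in> occs p \<longleftrightarrow> i \<in> insert 0 ((\<lambda>i. i + d) ` occs (drop d p))"
    proof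
      assume i: "i \<in> occs p"
      show "i \<in> insert 0 ((\<lambda>i. i + d) ` occs (drop d p))"
      proof (cases "i < d")
        case True
        have "i \<noteq> 1" "i \<noteq> 2" using i o occ_not1[of p 0] occ_not2[of p 0] by (auto simp: occs_def numeral_2_eq_2)
        moreover have "d = 4 \<longrightarrow> i \<noteq> 3"
          using i dp occ_not1[of p 3] by (auto simp: occs_def numeral_eq_Suc)
        ultimately have "i = 0" using True d by (cases "d = 3") auto
        then show ?thesis by simp
      next
        case False
        then have "i = (i - d) + d" by simp
        moreover have "i - d \<in> occs (drop d p)" using occs_drop[of "i-d" d p] False i by simp
        ultimately show ?thesis by blast
      qed
    next
      assume "i \<in> insert 0 ((\<lambda>i. i + d) ` occs (drop d p))"
      then show "i \<in> occs p" using o occs_drop by (auto simp: occs_def)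
    qed
  qed
  have cd: "card (occs (drop d p)) = k" using c by (simp add: clw_def)
  have card: "card (occs p) = Suc k"
    unfolding E using finite_occs cd d by (subst card_insert_disjoint) (auto simp: card_image)
  have len: "5 \<le> length p" using o occ_len by fastforce
  have cov: "\<forall>j < length p. \<exists>i \<in> occs p. i \<le> j \<and> j < i + 5"
  proof (intro allI impI)
    fix j assume j: "j < length p"
    show "\<exists>i \<in> occs p. i \<le> j \<and> j < i + 5"
    proof (cases "j < 5")
      case True then show ?thesis using o by (auto simp: occs_def)
    next
      case False
      then have "j - d < length (drop d p)" using j d by auto
      then obtain i where "i \<in> occs (drop d p)" "i \<le> j - d" "j - d < i + 5"
        using c unfolding clw_def by blast
      then show ?thesis using False d occs_drop[of i d p] by (intro bexI[of _ "i+d"]) auto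
    qed
  qed
  have ov: "\<forall>i \<in> occs p. \<forall>i' \<in> occs p.
        i < i' \<and> (\<forall>t. i < t \<and> t < i' \<longrightarrow> t \<notin> occs p) \<longrightarrow> i' < i + 5"
  proof (intro ballI impI)
    fix i i' assume ii: "i \<in> occs p" "i' \<in> occs p" and h: "i < i' \<and> (\<forall>t. i < t \<and> t < i' \<longrightarrow> t \<notin> occs p)"
    show "i' < i + 5"
    proof (cases "i = 0")
      case True
      then have "\<not> d < i'" using h dp d by auto
      then show ?thesis using True d by auto
    next
      case False
      then obtain a where a: "a \<in> occs (drop d p)" "i = a + d" using ii E by auto
      obtain a' where a': "a' \<in> occs (drop d p)" "i' = a' + d" using ii E h by auto
      have "\<forall>t. a < t \<and> t < a' \<longrightarrow> t \<notin> occs (drop d p)"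
        using h a a' occs_drop by fastforce
      then have "a' < a + 5" using c a a' h unfolding clw_def by auto
      then show ?thesis using a a' by simp
    qed
  qed
  show ?thesis unfolding clw_def using len card cov ov by blast
qed

lemma chain_clw: "chain p k \<Longrightarrow> clw k p"
proof (induction rule: chain.induct)
  case (c1 p)
  have "occs p = {0}" using c1 occ_len by (fastforce simp: occs_def)
  then show ?case unfolding clw_def using c1 by auto
next
  case (c3 p k) then show ?case using clw_shift by blast
next
  case (c4 p k) then show ?case using clw_shift by blast
qed


lemma clw_chain: "clw k p \<Longrightarrow> chain p k"
proof (induction "length p" arbitrary: p k rule: less_induct)
  case less
  have c: "clw k p" by fact
  have o0: "0 \<in> occs p" using clw_occ0[OF c] .
  have o: "occ_at p 0" using o0 by (simp add: occs_def)
  have kc: "card (occs p) = k" using c by (simp add: clw_def)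
  show ?case
  proof (cases "occs p = {0}")
    case True
    have len: "5 \<le> length p" using c by (simp add: clw_def)
    then obtain i where "i \<in> occs p" "i \<le> length p - 1" "length p - 1 < i + 5"
      using c unfolding clw_def by (meson diff_less less_le_trans zero_less_one zero_less_numeral)
    then have "length p = 5" using True len by auto
    moreover have "k = 1" using kc True by simp
    ultimately show ?thesis using o chain.c1 by simp
  next
    case False
    define D where "D = occs p - {0}"
    have Dne: "D \<noteq> {}" using False o0 D_def by auto
    have Df: "finite D" using finite_occs D_def by simp
    define d where "d = Min D"
    have dD: "d \<in> D" using Dne Df d_def by simp
    have dp: "d \<in> occs p" "d > 0" using dD D_def by auto
    have dmin: "\<And>t. t \<in> occs p \<Longrightarrow> t \<noteq> 0 \<Longrightarrow> d \<le> t" using Df D_def d_def by auto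
    have "\<forall>t. 0 < t \<and> t < d \<longrightarrow> t \<notin> occs p" using dmin by force
    then have d5: "d < 5" using c o0 dp unfolding clw_def by auto
    have "d \<noteq> 1" "d \<noteq> 2" using dp o occ_not1[of p 0] occ_not2[of p 0] by (auto simp: occs_def numeral_2_eq_2)
    then have d34: "d = 3 \<or> d = 4" using d5 dp by auto
    have E: "occs p - {0} = (\<lambda>i. i + d) ` occs (drop d p)"
    proof (rule set_eqI)
      fix i show "i \<in> occs p - {0} \<longleftrightarrow> i \<in> (\<lambda>i. i + d) ` occs (drop d p)"
      proof
        assume i: "i \<in> occs p - {0}"
        then have "d \<le> i" using dmin by auto
        then have "i = (i - d) + d" "i - d \<in> occs (drop d p)" using i occs_drop[of "i-d" d p] by auto
        then show "i \<in> (\<lambda>i. i + d) ` occs (drop d p)" by blast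
      next
        assume "i \<in> (\<lambda>i. i + d) ` occs (drop d p)"
        then show "i \<in> occs p - {0}" using occs_drop dp by auto
      qed
    qed
    have "card (occs p - {0}) = card (occs (drop d p))" unfolding E by (simp add: card_image)
    then have cdk: "card (occs (drop d p)) = k - 1" using kc o0 finite_occs by simp
    have "card (occs p) \<ge> 2"
    proof -
      have "{0, d} \<subseteq> occs p" using o0 dp by auto
      then have "card {0, d} \<le> card (occs p)" using finite_occs card_mono by blast
      then show ?thesis using dp by simp
    qed
    then have k2: "k = Suc (k - 1)" using kc by simp
    have lenp: "d + 5 \<le> length p" using dp occ_len by (simp add: occs_def)
    have cl: "clw (k - 1) (drop d p)"
      unfolding clw_def
    proof (intro conjI)
      show "5 \<le> length (drop d p)" using lenp by simp
      show "card (occs (drop d p)) = k - 1" by (rule cdk)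
      show "\<forall>j<length (drop d p). \<exists>i\<in>occs (drop d p). i \<le> j \<and> j < i + 5"
      proof (intro allI impI)
        fix j assume j: "j < length (drop d p)"
        then obtain i where i: "i \<in> occs p" "i \<le> j + d" "j + d < i + 5"
          using c unfolding clw_def by (metis add.commute length_drop less_diff_conv)
        show "\<exists>i\<in>occs (drop d p). i \<le> j \<and> j < i + 5"
        proof (cases "i = 0")
          case True
          have "0 \<in> occs (drop d p)" using occs_drop[of 0 d p] dp by simp
          then show ?thesis using True i by auto
        next
          case False
          then have "d \<le> i" using dmin i by auto
          then show ?thesis using i occs_drop[of "i - d" d p] by (intro bexI[of _ "i - d"]) auto
        qed
      qed
      show "\<forall>i\<in>occs (drop d p). \<forall>i'\<in>occs (drop d p).
         i < i' \<and> (\<forall>t. i < t \<and> t < i' \<longrightarrow> t \<notin> occs (drop d p)) \<longrightarrow> i' < i + 5"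
      proof (intro ballI impI)
        fix i i' assume ii: "i \<in> occs (drop d p)" "i' \<in> occs (drop d p)"
          and h: "i < i' \<and> (\<forall>t. i < t \<and> t < i' \<longrightarrow> t \<notin> occs (drop d p))"
        have "\<forall>t. i + d < t \<and> t < i' + d \<longrightarrow> t \<notin> occs p"
        proof (intro allI impI)
          fix t assume t: "i + d < t \<and> t < i' + d"
          show "t \<notin> occs p"
          proof
            assume "t \<in> occs p"
            then have "t - d \<in> occs (drop d p)" using t occs_drop[of "t - d" d p] by simp
            then show False using h t by (metis add_diff_cancel_right' less_diff_conv2 nat_less_le less_imp_le_nat diff_less_mono le_add2 le_trans)
          qed
        qed
        moreover have "i + d \<in> occs p" "i' + d \<in> occs p" using ii occs_drop by auto
        ultimately have "i' + d < i + d + 5" using c h unfolding clw_def by auto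
        then show "i' < i + 5" by simp
      qed
    qed
    have "chain (drop d p) (k - 1)" using less.hyps[of "drop d p" "k - 1"] cl dp lenp by simp
    then show ?thesis using d34 o k2 chain.c3 chain.c4 by metis
  qed
qed


lemma chain_basic: "chain p k \<Longrightarrow> occ_at p 0 \<and> 5 \<le> length p \<and> 1 \<le> k"
  by (induction rule: chain.induct) (auto dest: occ_len)

definition chn :: "nat list \<Rightarrow> nat \<Rightarrow> bool" where
  "chn q k \<longleftrightarrow> (length q = 1 \<and> k = 0) \<or> chain q k"

lemma chain_runs:
  "chain p k \<Longrightarrow> \<exists>l. 1 \<le> l \<and> l \<le> k \<and> (\<forall>j<l. occ_at p (3*j)) \<and> chn (drop (3*l+1) p) (k - l)"
proof (induction rule: chain.induct)
  case (c1 p)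
  then show ?case by (intro exI[of _ 1]) (auto simp: chn_def)
next
  case (c3 p k)
  then obtain l where l: "1 \<le> l" "l \<le> k" "\<forall>j<l. occ_at (drop 3 p) (3*j)" "chn (drop (3*l+1) (drop 3 p)) (k - l)"
    by blast
  have "\<forall>j<Suc l. occ_at p (3*j)"
  proof (intro allI impI)
    fix j assume "j < Suc l"
    then show "occ_at p (3*j)" using c3(1) l(3) occ_drop[of 3 p "3*(j-1)"] by (cases j) (auto simp: add.commute)
  qed
  moreover have "drop (3*l+1) (drop 3 p) = drop (3 * Suc l + 1) p" by simp
  ultimately show ?case using l by (intro exI[of _ "Suc l"]) auto
next
  case (c4 p k)
  then show ?case by (intro exI[of _ 1]) (auto simp: chn_def add.commute)
qed

lemma runs_chain:
  "1 \<le> l \<Longrightarrow> l \<le> k \<Longrightarrow> (\<forall>j<l. occ_at p (3*j)) \<Longrightarrow> chn (drop (3*l+1) p) (k - l) \<Longrightarrow> chain p k"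
proof (induction l arbitrary: p k)
  case 0 then show ?case by simp
next
  case (Suc l)
  have o: "occ_at p 0" using Suc.prems(3) by auto
  show ?case
  proof (cases "l = 0")
    case True
    show ?thesis
    proof (cases "k = 1")
      case True
      then have "length (drop 4 p) = 1" using Suc.prems(4) \<open>l = 0\<close> chain_basic by (auto simp: chn_def)
      moreover have "5 \<le> length p" using o occ_len by fastforce
      ultimately have "length p = 5" by simp
      then show ?thesis using o True chain.c1 by simp
    next
      case False
      then have "chain (drop 4 p) (k - 1)" using Suc.prems(2,4) \<open>l = 0\<close> by (auto simp: chn_def)
      moreover have "k = Suc (k - 1)" using Suc.prems(2) by simp
      ultimately show ?thesis using o chain.c4 by metis
    qed
  next
    case False
    have "\<forall>j<l. occ_at (drop 3 p) (3*j)"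
      using Suc.prems(3) occ_drop by (auto simp: add.commute)
    moreover have "drop (3*l+1) (drop 3 p) = drop (3 * Suc l + 1) p" by simp
    ultimately have "chain (drop 3 p) (k - 1)"
      using Suc.IH[of "k - 1" "drop 3 p"] Suc.prems False by auto
    moreover have "k = Suc (k - 1)" using Suc.prems(2) by simp
    ultimately show ?thesis using o chain.c3 by metis
  qed
qed

lemma chain_min: "chain p k \<Longrightarrow> i < length p \<Longrightarrow> p!0 \<le> p!i"
proof (induction arbitrary: i rule: chain.induct)
  case (c1 p)
  then have "i < 5" by simp
  then show ?case using c1(2) unfolding occ0_def occ_occ0
    by (auto simp: less_Suc_eq numeral_eq_Suc)
next
  case (c3 p k)
  show ?case
  proof (cases "i < 3")
    case True then show ?thesis using c3(1) unfolding occ0_def occ_occ0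
      by (auto simp: less_Suc_eq numeral_eq_Suc)
  next
    case False
    have "drop 3 p ! 0 \<le> drop 3 p ! (i - 3)" using c3.IH[of "i-3"] c3.prems False by simp
    moreover have "p!0 < p!3" using c3(1) unfolding occ0_def occ_occ0 by simp
    ultimately show ?thesis using False c3.prems by (simp add: nth_drop)
  qed
next
  case (c4 p k)
  show ?case
  proof (cases "i < 4")
    case True then show ?thesis using c4(1) unfolding occ0_def occ_occ0
      by (auto simp: less_Suc_eq numeral_eq_Suc)
  next
    case False
    have "drop 4 p ! 0 \<le> drop 4 p ! (i - 4)" using c4.IH[of "i-4"] c4.prems False by simp
    moreover have "p!0 < p!4" using c4(1) unfolding occ0_def occ_occ0 by simp
    ultimately show ?thesis using False c4.prems by (simp add: nth_drop)
  qed
qed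

lemma chn_min: "chn q k \<Longrightarrow> i < length q \<Longrightarrow> q!0 \<le> q!i"
  unfolding chn_def using chain_min by auto


lemma occ_map:
  assumes f: "strict_mono_on A f" and p: "set p \<subseteq> A"
  shows "occ_at (map f p) i \<longleftrightarrow> occ_at p i"
proof (cases "i + 5 \<le> length p")
  case True
  have m: "\<And>a b. a < length p \<Longrightarrow> b < length p \<Longrightarrow> f (p!a) < f (p!b) \<longleftrightarrow> p!a < p!b"
    using strict_mono_on_less[OF f] p nth_mem by blast
  show ?thesis unfolding occ_iff using True m by auto
next
  case False
  then show ?thesis unfolding occ_iff by simp
qed

lemma chain_map1:
  "chain p k \<Longrightarrow> strict_mono_on A f \<Longrightarrow> set p \<subseteq> A \<Longrightarrow> chain (map f p) k"
proof (induction rule: chain.induct)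
  case (c1 p) then show ?case using occ_map chain.c1 by simp
next
  case (c3 p k)
  have "set (drop 3 p) \<subseteq> A" using c3.prems set_drop_subset by fastforce
  then show ?case using c3 occ_map[OF c3.prems] chain.c3 drop_map by metis
next
  case (c4 p k)
  have "set (drop 4 p) \<subseteq> A" using c4.prems set_drop_subset by fastforce
  then show ?case using c4 occ_map[OF c4.prems] chain.c4 drop_map by metis
qed

lemma chain_map2:
  "chain q k \<Longrightarrow> q = map f p \<Longrightarrow> strict_mono_on A f \<Longrightarrow> set p \<subseteq> A \<Longrightarrow> chain p k"
proof (induction arbitrary: p rule: chain.induct)
  case (c1 q) then show ?case using occ_map chain.c1 by (metis length_map)
next
  case (c3 q k)
  have "set (drop 3 p) \<subseteq> A" using c3.prems set_drop_subset by fastforce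
  moreover have "drop 3 q = map f (drop 3 p)" using c3.prems by (simp add: drop_map)
  ultimately have "chain (drop 3 p) k" using c3.IH c3.prems by blast
  moreover have "occ_at p 0" using c3 occ_map by blast
  ultimately show ?case using chain.c3 by blast
next
  case (c4 q k)
  have "set (drop 4 p) \<subseteq> A" using c4.prems set_drop_subset by fastforce
  moreover have "drop 4 q = map f (drop 4 p)" using c4.prems by (simp add: drop_map)
  ultimately have "chain (drop 4 p) k" using c4.IH c4.prems by blast
  moreover have "occ_at p 0" using c4 occ_map by blast
  ultimately show ?case using chain.c4 by blast
qed

lemma chain_map:
  "strict_mono_on A f \<Longrightarrow> set p \<subseteq> A \<Longrightarrow> chain (map f p) k \<longleftrightarrow> chain p k"
  using chain_map1 chain_map2 by blast

lemma chain_len: "chain p k \<Longrightarrow> 5 \<le> length p"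
  using chain_basic by blast

lemma cnt_eq:
  assumes fin: "finite S" and ne: "S \<noteq> {}"
  shows "card {q. distinct q \<and> set q = S \<and> chn q k} = s (card S) k"
proof (cases "card S = 1")
  case True
  then obtain x where x: "S = {x}" using card_1_singletonE by blast
  have "{q. distinct q \<and> set q = S \<and> chn q k} = (if k = 0 then {[x]} else {})"
  proof (cases "k = 0")
    case True
    have "distinct q \<and> set q = {x} \<and> chn q 0 \<longleftrightarrow> q = [x]" for q
    proof
      assume h: "distinct q \<and> set q = {x} \<and> chn q 0"
      then have "length q = 1" using distinct_card[of q] by simp
      then show "q = [x]" using h by (cases q) auto
    qed (auto simp: chn_def)
    then show ?thesis using True x by auto
  next
    case False
    have "\<not> (distinct q \<and> set q = {x} \<and> chn q k)" for q
    proof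
      assume h: "distinct q \<and> set q = {x} \<and> chn q k"
      then have "length q = 1" using distinct_card[of q] by simp
      then show False using h False chain_len unfolding chn_def by fastforce
    qed
    then show ?thesis using False x by auto
  qed
  moreover have "s 1 k = (if k = 0 then 1 else 0)"
    unfolding s_def is_cluster_def by (auto simp: sigma_def)
  ultimately show ?thesis using True by simp
next
  case False
  define m where "m = card S"
  have m2: "m \<noteq> 1" using False m_def by simp
  define xs where "xs = sorted_list_of_set S"
  have xs: "sorted_wrt (<) xs" "set xs = S" "length xs = m"
    using fin by (simp_all add: xs_def m_def)
  define g where "g i = xs ! (i - 1)" for i
  have gm: "strict_mono_on {1..m} g"
    unfolding strict_mono_on_def g_def
    using xs sorted_wrt_iff_nth_less[of "(<)" xs] by auto
  have gimg: "g ` {1..m} = S"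
  proof
    show "g ` {1..m} \<subseteq> S" using xs by (auto simp: g_def)
    show "S \<subseteq> g ` {1..m}"
    proof
      fix x assume "x \<in> S"
      then obtain j where j: "j < m" "xs ! j = x" using xs by (auto simp: in_set_conv_nth)
      then have "x = g (Suc j)" by (simp add: g_def)
      then show "x \<in> g ` {1..m}" using j by auto
    qed
  qed
  have ginj: "inj_on g {1..m}" using gm strict_mono_on_imp_inj_on by blast
  have sm: "s m k = card {p. is_perm m p \<and> chain p k}"
  proof -
    have "{p. is_cluster m k p} = {p. is_perm m p \<and> chain p k}"
      using is_cluster_clw clw_chain chain_clw by blast
    then show ?thesis using m2 by (simp add: s_def)
  qed
  have Q: "{q. distinct q \<and> set q = S \<and> chn q k} = {q. distinct q \<and> set q = S \<and> chain q k}"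
    using m2 distinct_card m_def unfolding chn_def by fastforce
  have "map g ` {p. is_perm m p \<and> chain p k} = {q. distinct q \<and> set q = S \<and> chain q k}"
  proof
    show "map g ` {p. is_perm m p \<and> chain p k} \<subseteq> {q. distinct q \<and> set q = S \<and> chain q k}"
    proof
      fix q assume "q \<in> map g ` {p. is_perm m p \<and> chain p k}"
      then obtain p where p: "q = map g p" "is_perm m p" "chain p k" by blast
      have "distinct q" using p ginj unfolding is_perm_def by (simp add: distinct_map)
      moreover have "set q = S" using p gimg unfolding is_perm_def by simp
      moreover have "chain q k" using p chain_map[OF gm, of p k] unfolding is_perm_def by simp
      ultimately show "q \<in> {q. distinct q \<and> set q = S \<and> chain q k}" by blast
    qed
    show "{q. distinct q \<and> set q = S \<and> chain q k} \<subseteq> map g ` {p. is_perm m p \<and> chain p k}"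
    proof
      fix q assume q: "q \<in> {q. distinct q \<and> set q = S \<and> chain q k}"
      define h where "h = the_inv_into {1..m} g"
      define p where "p = map h q"
      have gh: "\<And>x. x \<in> S \<Longrightarrow> g (h x) = x"
        unfolding h_def using f_the_inv_into_f[OF ginj] gimg by blast
      have "map (\<lambda>x. g (h x)) q = q" using q gh by (intro map_idI) auto
      then have qp: "q = map g p" unfolding p_def by (simp add: comp_def)
      have hS: "h ` S = {1..m}" unfolding h_def using the_inv_into_onto[OF ginj] gimg by simp
      have hinj: "inj_on h S" unfolding h_def using inj_on_the_inv_into[OF ginj] gimg by simp
      have "is_perm m p"
      proof -
        have "length q = m" using q distinct_card[of q] m_def by simp
        moreover have "distinct (map h q)" using q hinj by (simp add: distinct_map)
        moreover have "set (map h q) = {1..m}" using q hS by simp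
        ultimately show ?thesis unfolding is_perm_def p_def by simp
      qed
      moreover have "chain p k"
        using q qp chain_map[OF gm, of p k] \<open>is_perm m p\<close> unfolding is_perm_def by simp
      ultimately show "q \<in> map g ` {p. is_perm m p \<and> chain p k}" using qp by blast
    qed
  qed
  moreover have "inj_on (map g) {p. is_perm m p \<and> chain p k}"
  proof (rule inj_onI)
    fix p1 p2 assume "p1 \<in> {p. is_perm m p \<and> chain p k}" "p2 \<in> {p. is_perm m p \<and> chain p k}"
      and e: "map g p1 = map g p2"
    then have "set p1 \<union> set p2 = {1..m}" by (simp add: is_perm_def)
    then show "p1 = p2" using e inj_on_map_eq_map[of g p1 p2] ginj by simp
  qed
  then have "card (map g ` {p. is_perm m p \<and> chain p k}) = card {p. is_perm m p \<and> chain p k}"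
    by (rule card_image)
  ultimately have "card {q. distinct q \<and> set q = S \<and> chain q k} = card {p. is_perm m p \<and> chain p k}"
    by simp
  then show ?thesis using Q sm m_def by simp
qed



definition bset :: "(nat \<times> nat) list \<Rightarrow> nat set" where
  "bset ps = set (map fst ps) \<union> set (map snd ps)"

definition bdist :: "(nat \<times> nat) list \<Rightarrow> bool" where
  "bdist ps \<longleftrightarrow> distinct (map fst ps @ map snd ps)"

definition Wset :: "nat \<Rightarrow> nat set \<Rightarrow> (nat \<times> nat) list set" where
  "Wset l B = {ps. length ps = l \<and> sorted_wrt (>) (map fst ps) \<and> (\<forall>x\<in>set ps. fst x < snd x)
      \<and> bdist ps \<and> bset ps = B}"

definition W'set :: "nat \<Rightarrow> nat set \<Rightarrow> (nat \<times> nat) list set" where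
  "W'set l B = {ps. length ps = l \<and> sorted_wrt (<) (map fst ps) \<and> (\<forall>x\<in>set ps. fst x < snd x)
      \<and> bdist ps \<and> bset ps = B}"

lemma dfact_odd_Suc: "dfact_odd (Suc l) = (2 * l + 1) * dfact_odd l"
  by (simp add: dfact_odd_def)

lemma dfact_pos: "0 < dfact_odd l"
  by (simp add: dfact_odd_def)

lemma W'_cons:
  assumes h: "(b, c) # ps' \<in> W'set (Suc l) B" and fin: "finite B"
  shows "b = Min B \<and> c \<in> B - {Min B} \<and> ps' \<in> W'set l (B - {Min B, c})"
proof -
  have h1: "length ps' = l" "\<forall>y\<in>set (map fst ps'). b < y" "sorted_wrt (<) (map fst ps')"
      "b < c" "\<forall>x\<in>set ps'. fst x < snd x"
      "distinct (b # map fst ps' @ c # map snd ps')"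
    using h unfolding W'set_def bdist_def by simp_all
  have h7: "B = insert b (insert c (bset ps'))" using h unfolding W'set_def by (auto simp: bset_def)
  have bB: "b \<in> B" "c \<in> B" using h7 by auto
  have ble: "b \<le> z" if z: "z \<in> B" for z
  proof -
    have "z = b \<or> z = c \<or> z \<in> fst ` set ps' \<or> z \<in> snd ` set ps'"
      using z h7 by (simp add: bset_def)
    then show "b \<le> z"
    proof (elim disjE)
      assume "z \<in> snd ` set ps'"
      then obtain y where "y \<in> set ps'" "z = snd y" by blast
      have "b < fst y" using h1(2) \<open>y \<in> set ps'\<close> by simp
      moreover have "fst y < snd y" using h1(5) \<open>y \<in> set ps'\<close> by blast
      ultimately have "b < snd y" by (rule less_trans)
      then show "b \<le> z" using \<open>z = snd y\<close> by (metis less_imp_le)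
    next
      assume "z \<in> fst ` set ps'"
      then show "b \<le> z" using h1(2) by auto
    next
      assume "z = c" then show "b \<le> z" using h1(4) by simp
    qed simp
  qed
  have bm: "Min B = b" using fin bB ble by (intro Min_eqI) auto
  have nb: "b \<notin> bset ps'" "c \<notin> bset ps'" "b \<noteq> c" using h1(6) by (auto simp: bset_def)
  have "bset ps' = insert b (insert c (bset ps')) - {b, c}" using nb by auto
  then have bs: "bset ps' = B - {Min B, c}" using h7 bm by simp
  have d1: "distinct (map fst ps' @ map snd ps')" using h1(6) by simp
  have "ps' \<in> W'set l (B - {Min B, c})"
    unfolding W'set_def bdist_def using h1(1,3,5) d1 bs by simp
  then show ?thesis using bm bB nb by simp
qed

lemma W'set_Suc:
  assumes fin: "finite B" and ne: "B \<noteq> {}"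
  shows "W'set (Suc l) B = (\<Union>c \<in> B - {Min B}. (\<lambda>ps. (Min B, c) # ps) ` W'set l (B - {Min B, c}))"
proof (rule set_eqI)
  fix ps
  show "ps \<in> W'set (Suc l) B \<longleftrightarrow> ps \<in> (\<Union>c \<in> B - {Min B}. (\<lambda>ps. (Min B, c) # ps) ` W'set l (B - {Min B, c}))"
  proof
    assume h: "ps \<in> W'set (Suc l) B"
    then have "length ps = Suc l" by (simp add: W'set_def)
    then obtain x ps' where "ps = x # ps'" by (cases ps) auto
    moreover obtain b c where "x = (b, c)" by (cases x)
    ultimately have ps: "ps = (b, c) # ps'" by simp
    have "b = Min B \<and> c \<in> B - {Min B} \<and> ps' \<in> W'set l (B - {Min B, c})"
      using W'_cons[of b c ps' l B] h fin unfolding ps by blast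
    then show "ps \<in> (\<Union>c \<in> B - {Min B}. (\<lambda>ps. (Min B, c) # ps) ` W'set l (B - {Min B, c}))"
      using ps by blast
  next
    assume "ps \<in> (\<Union>c \<in> B - {Min B}. (\<lambda>ps. (Min B, c) # ps) ` W'set l (B - {Min B, c}))"
    then obtain c ps' where c: "c \<in> B - {Min B}" "ps' \<in> W'set l (B - {Min B, c})" "ps = (Min B, c) # ps'"
      by blast
    have mle: "\<And>x. x \<in> B - {Min B} \<Longrightarrow> Min B < x" using fin
      by (metis Diff_iff Min_le le_neq_implies_less singletonI)
    have mB: "Min B \<in> B" using fin ne by simp
    have w: "length ps' = l" "sorted_wrt (<) (map fst ps')" "\<forall>x\<in>set ps'. fst x < snd x"
      "distinct (map fst ps' @ map snd ps')" "bset ps' = B - {Min B, c}"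
      using c(2) unfolding W'set_def bdist_def by auto
    have fs: "\<forall>y\<in>set (map fst ps'). Min B < y" using w(5) mle by (auto simp: bset_def)
    have mc: "Min B < c" using mle c by blast
    have nb: "Min B \<notin> bset ps'" "c \<notin> bset ps'" using w(5) by auto
    have d: "distinct (map fst ps @ map snd ps)" using nb mc w(4) unfolding c(3) by (auto simp: bset_def)
    have st: "sorted_wrt (<) (map fst ps)" using fs w(2) unfolding c(3) by simp
    have pr: "\<forall>x\<in>set ps. fst x < snd x" using mc w(3) unfolding c(3) by simp
    have bs: "bset ps = B" using w(5) c(1) mB unfolding c(3) bset_def by auto
    show "ps \<in> W'set (Suc l) B"
      unfolding W'set_def bdist_def using d st pr bs w(1) c(3) by simp
  qed
qed

lemma W'set_card: "finite B \<Longrightarrow> card B = 2 * l \<Longrightarrow> card (W'set l B) = dfact_odd l"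
proof (induction l arbitrary: B)
  case 0
  then have "B = {}" by simp
  then have "W'set 0 B = {[]}" by (auto simp: W'set_def bset_def bdist_def)
  then show ?case by (simp add: dfact_odd_def)
next
  case (Suc l)
  have ne: "B \<noteq> {}" using Suc.prems by auto
  have mB: "Min B \<in> B" using Suc.prems ne by simp
  have fin: "finite (B - {Min B})" using Suc.prems by simp
  have cardc: "\<And>c. c \<in> B - {Min B} \<Longrightarrow> card (W'set l (B - {Min B, c})) = dfact_odd l"
  proof -
    fix c assume c: "c \<in> B - {Min B}"
    have "card (B - {Min B, c}) = 2 * l" using Suc.prems c mB
      by (simp add: card_Diff_subset)
    then show "card (W'set l (B - {Min B, c})) = dfact_odd l" using Suc.IH Suc.prems by simp
  qed
  have finW: "\<And>c. c \<in> B - {Min B} \<Longrightarrow> finite (W'set l (B - {Min B, c}))"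
  proof -
    fix c assume "c \<in> B - {Min B}"
    then have "0 < card (W'set l (B - {Min B, c}))" using cardc dfact_pos by simp
    then show "finite (W'set l (B - {Min B, c}))" by (rule card_ge_0_finite)
  qed
  have "card (W'set (Suc l) B) = (\<Sum>c \<in> B - {Min B}. card ((\<lambda>ps. (Min B, c) # ps) ` W'set l (B - {Min B, c})))"
    unfolding W'set_Suc[OF Suc.prems(1) ne]
    by (rule card_UN_disjoint[OF fin]) (auto simp: finW)
  also have "\<dots> = (\<Sum>c \<in> B - {Min B}. dfact_odd l)"
  proof (rule sum.cong)
    fix c assume c: "c \<in> B - {Min B}"
    have "inj_on (\<lambda>ps. (Min B, c) # ps) (W'set l (B - {Min B, c}))" by (simp add: inj_on_def)
    then show "card ((\<lambda>ps. (Min B, c) # ps) ` W'set l (B - {Min B, c})) = dfact_odd l"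
      using cardc[OF c] by (simp add: card_image)
  qed simp
  also have "\<dots> = (2 * l + 1) * dfact_odd l" using Suc.prems mB by simp
  finally show ?case by (simp add: dfact_odd_Suc)
qed

lemma Wset_rev: "W'set l B = rev ` Wset l B"
proof -
  have r: "ps \<in> W'set l B \<longleftrightarrow> rev ps \<in> Wset l B" for ps
    unfolding W'set_def Wset_def bdist_def bset_def
    by (auto simp: rev_map[symmetric] sorted_wrt_rev)
  show ?thesis
  proof (rule set_eqI)
    fix ps show "ps \<in> W'set l B \<longleftrightarrow> ps \<in> rev ` Wset l B"
    proof
      assume "ps \<in> W'set l B"
      then have "rev ps \<in> Wset l B" using r by simp
      then show "ps \<in> rev ` Wset l B" by (metis image_eqI rev_rev_ident)
    next
      assume "ps \<in> rev ` Wset l B"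
      then obtain qs where "qs \<in> Wset l B" "ps = rev qs" by blast
      then show "ps \<in> W'set l B" using r by simp
    qed
  qed
qed

lemma Wset_card: "finite B \<Longrightarrow> card B = 2 * l \<Longrightarrow> card (Wset l B) = dfact_odd l"
proof -
  assume a: "finite B" "card B = 2 * l"
  have "card (W'set l B) = card (Wset l B)" unfolding Wset_rev
    by (rule card_image) (simp add: inj_on_def)
  then show ?thesis using W'set_card[OF a] by simp
qed



fun pre :: "nat \<Rightarrow> (nat \<times> nat) list \<Rightarrow> nat list" where
  "pre a [] = [a]"
| "pre a ((b, c) # ps) = a # b # c # pre (Suc a) ps"

lemma length_pre [simp]: "length (pre a ps) = 3 * length ps + 1"
  by (induction a ps rule: pre.induct) auto

lemma set_pre: "set (pre a ps) = {a..a + length ps} \<union> bset ps"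
  by (induction a ps rule: pre.induct) (auto simp: bset_def)

lemma pre_nth_a: "j \<le> length ps \<Longrightarrow> pre a ps ! (3 * j) = a + j"
proof (induction a ps arbitrary: j rule: pre.induct)
  case (1 a) then show ?case by simp
next
  case (2 a b c ps)
  then show ?case by (cases j) auto
qed

lemma pre_nth_b: "j < length ps \<Longrightarrow> pre a ps ! (3 * j + 1) = fst (ps ! j)"
proof (induction a ps arbitrary: j rule: pre.induct)
  case (1 a) then show ?case by simp
next
  case (2 a b c ps)
  then show ?case by (cases j) auto
qed

lemma pre_nth_c: "j < length ps \<Longrightarrow> pre a ps ! (3 * j + 2) = snd (ps ! j)"
proof (induction a ps arbitrary: j rule: pre.induct)
  case (1 a) then show ?case by simp
next
  case (2 a b c ps)
  then show ?case by (cases j) auto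
qed

lemma pre_inj: "pre a ps1 = pre a ps2 \<Longrightarrow> ps1 = ps2"
proof (induction a ps1 arbitrary: ps2 rule: pre.induct)
  case (1 a) then show ?case by (cases ps2) auto
next
  case (2 a b c ps)
  then show ?case by (cases ps2) auto
qed

lemma pre_distinct: "bdist ps \<Longrightarrow> (\<forall>x\<in>bset ps. a + length ps < x) \<Longrightarrow> distinct (pre a ps)"
proof (induction a ps rule: pre.induct)
  case (1 a) then show ?case by simp
next
  case (2 a b c ps)
  have d: "bdist ps" using 2(2) by (simp add: bdist_def)
  have g: "\<forall>x\<in>bset ps. Suc a + length ps < x" using 2(3) by (simp add: bset_def)
  have IH: "distinct (pre (Suc a) ps)" using 2(1) d g by blast
  have s: "set (pre (Suc a) ps) = {Suc a..Suc a + length ps} \<union> bset ps" by (rule set_pre)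
  have "b \<notin> bset ps" "c \<notin> bset ps" "b \<noteq> c" using 2(2) by (auto simp: bdist_def bset_def)
  moreover have "Suc (a + length ps) < b" "Suc (a + length ps) < c" using 2(3) by (auto simp: bset_def)
  ultimately show ?case using IH s g by fastforce
qed

lemma pre_distinct_bdist: "distinct (pre a ps) \<Longrightarrow> bdist ps"
proof (induction a ps rule: pre.induct)
  case (1 a) then show ?case by (simp add: bdist_def)
next
  case (2 a b c ps)
  have IH: "bdist ps" using 2 by simp
  have s: "set (pre (Suc a) ps) = {Suc a..Suc a + length ps} \<union> bset ps" by (rule set_pre)
  have "b \<notin> bset ps" "c \<notin> bset ps" "b \<noteq> c" using 2(2) s by auto
  then show ?case using IH by (auto simp: bdist_def bset_def)
qed

lemma occ_pre:
  "sorted_wrt (>) (map fst ps) \<Longrightarrow> \<forall>x\<in>set ps. fst x < snd x \<Longrightarrow> q \<noteq> [] \<Longrightarrow>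
   (\<forall>x\<in>bset ps. a + length ps < x) \<Longrightarrow> (\<forall>x\<in>set ps. hd q < fst x) \<Longrightarrow> a + length ps < hd q \<Longrightarrow>
   \<forall>j<length ps. occ_at (pre a ps @ q) (3*j)"
proof (induction a ps rule: pre.induct)
  case (1 a) then show ?case by simp
next
  case (2 a b c ps)
  have IH: "\<forall>j<length ps. occ_at (pre (Suc a) ps @ q) (3*j)"
    using 2 by (simp add: bset_def)
  have o0: "occ_at (pre a ((b, c) # ps) @ q) 0"
  proof (cases ps)
    case Nil
    then show ?thesis using 2(2-7) by (cases q) (auto simp: occ_iff bset_def)
  next
    case (Cons x ps')
    obtain b' c' where x: "x = (b', c')" by (cases x)
    have "b' < b" using 2(2) Cons x by simp
    moreover have "a + length ps < b'" using 2(5) Cons x by (auto simp: bset_def)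
    moreover have "b < c" using 2(3) by simp
    moreover have "length (pre a ((b, c) # ps) @ q) \<ge> 5" using Cons 2(4) by (cases q) auto
    ultimately show ?thesis using Cons x by (simp add: occ_iff)
  qed
  show ?case
  proof (intro allI impI)
    fix j assume j: "j < length ((b, c) # ps)"
    show "occ_at (pre a ((b, c) # ps) @ q) (3 * j)"
    proof (cases j)
      case 0 then show ?thesis using o0 by simp
    next
      case (Suc j')
      then have "occ_at (pre (Suc a) ps @ q) (3 * j')" using IH j by simp
      then have "occ_at (pre a ((b, c) # ps) @ q) (3 * j' + 3)"
        using occ_drop[of 3 "a # b # c # pre (Suc a) ps @ q" "3*j'"] by simp
      then show ?thesis using Suc by (simp add: add.commute)
    qed
  qed
qed


lemma dec_chain:
  fixes g :: "nat \<Rightarrow> nat"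
  assumes "\<And>m. m < N \<Longrightarrow> g (Suc m) < g m"
  shows "i < j \<Longrightarrow> j \<le> N \<Longrightarrow> g j < g i"
proof (induction j)
  case 0 then show ?case by simp
next
  case (Suc j)
  show ?case
  proof (cases "i = j")
    case True then show ?thesis using assms Suc.prems by simp
  next
    case False
    then have "g j < g i" using Suc by simp
    moreover have "g (Suc j) < g j" using assms Suc.prems by simp
    ultimately show ?thesis by simp
  qed
qed

lemma inc_chain:
  fixes g :: "nat \<Rightarrow> nat"
  assumes "\<And>m. m < N \<Longrightarrow> g m < g (Suc m)"
  shows "i < j \<Longrightarrow> j \<le> N \<Longrightarrow> g i < g j"
proof (induction j)
  case 0 then show ?case by simp
next
  case (Suc j)
  show ?case
  proof (cases "i = j")
    case True then show ?thesis using assms Suc.prems by simp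
  next
    case False
    then have "g i < g j" using Suc by simp
    moreover have "g j < g (Suc j)" using assms Suc.prems by simp
    ultimately show ?thesis by simp
  qed
qed

lemma run_values:
  assumes perm: "is_perm n p" and l1: "1 \<le> l" and occ: "\<forall>j<l. occ_at p (3*j)"
    and ch: "chn (drop (3*l+1) p) kk" and len: "3*l+2 \<le> n"
  shows "(\<forall>j\<le>l. p!(3*j) = j+1) \<and> p!(3*l+1) = l+2 \<and>
         (\<forall>j<l. l+2 < p!(3*j+1) \<and> p!(3*j+1) < p!(3*j+2)) \<and>
         (\<forall>i j. i < j \<and> j < l \<longrightarrow> p!(3*j+1) < p!(3*i+1))"
proof -
  have lp: "length p = n" and sp: "set p = {1..n}" and dp: "distinct p" using perm by (auto simp: is_perm_def)
  define y where "y = p!(3*l+1)"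
  have F1: "p!(3*m) < p!(3*(Suc m))" if "m < l" for m
    using occ that occ_iff[of p "3*m"] by (simp add: add.commute)
  have F4: "p!(3*(Suc m)+1) < p!(3*m+1) \<and> p!(3*m+1) < p!(3*m+2)" if "m < l" for m
  proof -
    have "occ_at p (3*m)" using occ that by simp
    then have "p!(3*m+4) < p!(3*m+1)" "p!(3*m+1) < p!(3*m+2)" unfolding occ_iff by simp_all
    moreover have e: "3*(Suc m)+1 = 3*m+4" by simp
    ultimately show ?thesis by (simp only: e)
  qed
  have F2: "p!(3*l) < y"
  proof -
    have "occ_at p (3*(l-1))" using occ l1 by simp
    then have "p!(3*(l-1)+3) < p!(3*(l-1)+4)" unfolding occ_iff by simp
    moreover have e1: "3*(l-1)+3 = 3*l" and e2: "3*(l-1)+4 = 3*l+1" using l1 by simp_all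
    ultimately show ?thesis unfolding y_def by (simp only: e1 e2)
  qed
  have F3: "y \<le> p!i" if "i < n" "3*l+1 \<le> i" for i
  proof -
    have "drop (3*l+1) p ! 0 \<le> drop (3*l+1) p ! (i - (3*l+1))"
      using chn_min[OF ch, of "i - (3*l+1)"] that lp by simp
    moreover have "drop (3*l+1) p ! (i - (3*l+1)) = p!i" using that lp by simp
    moreover have "drop (3*l+1) p ! 0 = y" unfolding y_def using that lp by simp
    ultimately show ?thesis by simp
  qed
  have G1: "y < p!(3*j+1)" if "j < l" for j
    using dec_chain[of l "\<lambda>j. p!(3*j+1)" j l] F4 that unfolding y_def by simp
  have Ginc: "p!(3*i) < p!(3*j)" if "i < j" "j \<le> l" for i j
    using inc_chain[of l "\<lambda>j. p!(3*j)" i j] F1 that by simp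
  have Gle: "p!(3*i) \<le> p!(3*j)" if "i \<le> j" "j \<le> l" for i j
    using Ginc[of i j] that by (cases "i = j") auto
  have G2: "y \<le> p!i" if "i < n" "\<not> (i mod 3 = 0 \<and> i \<le> 3*l)" for i
  proof (cases "3*l+1 \<le> i")
    case True then show ?thesis using F3 that by simp
  next
    case False
    define j where "j = i div 3"
    have i: "i = 3*j + i mod 3" unfolding j_def by simp
    have jl: "j < l" using False that i by auto
    have "i mod 3 = 1 \<or> i mod 3 = 2" using that False by auto
    then show ?thesis
    proof
      assume "i mod 3 = 1"
      then have "i = 3*j+1" using i by simp
      then show ?thesis using G1[OF jl] by simp
    next
      assume "i mod 3 = 2"
      then have "i = 3*j+2" using i by simp
      then show ?thesis using G1[OF jl] F4[OF jl] by simp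
    qed
  qed
  have vals: "p!i \<in> {1..n}" if "i < n" for i using that sp lp nth_mem by blast
  have Key: "\<exists>j\<le>l. p!(3*j) = v" if "v \<in> {1..n}" "v < y" for v
  proof -
    have "v \<in> set p" using that sp by simp
    then obtain i where i: "i < n" "p!i = v" using lp by (auto simp: in_set_conv_nth)
    then have "i mod 3 = 0 \<and> i \<le> 3*l" using G2 that by force
    then show ?thesis using i by (intro exI[of _ "i div 3"]) auto
  qed
  have yn: "y \<le> n" using vals[of "3*l+1"] len unfolding y_def by simp
  have fl: "p!(3*l) < y" by (rule F2)
  have A: "p!(3*j) = j+1" if "j \<le> l" for j
    using that
  proof (induction j)
    case 0
    have "p!0 \<le> p!(3*l)" using Gle[of 0 l] by simp
    then have "1 < y" using vals[of 0] fl len by simp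
    then obtain j where j: "j \<le> l" "p!(3*j) = 1" using Key[of 1] yn by auto
    have "p!0 \<le> p!(3*j)" using Gle[of 0 j] j by simp
    then show ?case using j vals[of 0] len by simp
  next
    case (Suc j)
    have IH: "p!(3*j) = j+1" using Suc by simp
    have "p!(3*Suc j) \<le> p!(3*l)" using Gle[of "Suc j" l] Suc.prems by simp
    moreover have "p!(3*j) < p!(3*Suc j)" using Ginc[of j "Suc j"] Suc.prems by simp
    ultimately have "j + 2 < y" using fl IH by simp
    then obtain j' where j': "j' \<le> l" "p!(3*j') = j+2" using Key[of "j+2"] yn by auto
    have "j < j'"
    proof (rule ccontr)
      assume "\<not> j < j'"
      then have "p!(3*j') \<le> p!(3*j)" using Gle[of j' j] Suc.prems by simp
      then show False using j' IH by simp
    qed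
    then have "p!(3*Suc j) \<le> p!(3*j')" using Gle[of "Suc j" j'] j' by simp
    then show ?case using j' IH \<open>p!(3*j) < p!(3*Suc j)\<close> by simp
  qed
  have Y: "y = l+2"
  proof (rule ccontr)
    assume "y \<noteq> l+2"
    moreover have "l + 1 < y" using fl A[of l] by simp
    ultimately have "l+2 < y" by simp
    then obtain j' where "j' \<le> l" "p!(3*j') = l+2" using Key[of "l+2"] yn by auto
    then show False using A by fastforce
  qed
  have B: "\<forall>j<l. l+2 < p!(3*j+1) \<and> p!(3*j+1) < p!(3*j+2)"
    using G1 F4 Y by auto
  have C: "\<forall>i j. i < j \<and> j < l \<longrightarrow> p!(3*j+1) < p!(3*i+1)"
    using dec_chain[of l "\<lambda>j. p!(3*j+1)"] F4 by auto
  show ?thesis using A Y B C unfolding y_def by simp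
qed



definition Xs :: "nat \<Rightarrow> nat \<Rightarrow> nat \<Rightarrow> nat list set" where
  "Xs n k l = {p. is_perm n p \<and> (\<forall>j<l. occ_at p (3*j)) \<and> chn (drop (3*l+1) p) (k - l)}"

definition Ys :: "nat \<Rightarrow> nat \<Rightarrow> nat \<Rightarrow> ((nat \<times> nat) list \<times> nat list) set" where
  "Ys n k l = {(ps, q). ps \<in> Wset l (bset ps) \<and> bset ps \<subseteq> {l+3..n} \<and> distinct q
       \<and> set q = {l+2..n} - bset ps \<and> chn q (k - l)}"

definition Phi :: "(nat \<times> nat) list \<times> nat list \<Rightarrow> nat list" where
  "Phi x = pre 1 (fst x) @ snd x"

lemma hd_chn:
  assumes "chn q kk" "set q = S" "x \<in> S" "\<forall>z\<in>S. x \<le> z"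
  shows "q \<noteq> [] \<and> hd q = x"
proof -
  have ne: "q \<noteq> []" using assms by auto
  have "x \<in> set q" using assms by simp
  then obtain i where i: "i < length q" "q!i = x" by (auto simp: in_set_conv_nth)
  have "q!0 \<le> q!i" using chn_min[OF assms(1) i(1)] .
  moreover have "q!0 \<in> set q" using ne by simp
  then have "x \<le> q!0" using assms(2,4) by simp
  ultimately have "q!0 = x" using i by simp
  then show ?thesis using ne by (simp add: hd_conv_nth)
qed

lemma bset_card: "ps \<in> Wset l B \<Longrightarrow> card B = 2 * l"
proof -
  assume h: "ps \<in> Wset l B"
  have "bset ps = set (map fst ps @ map snd ps)" by (simp add: bset_def)
  moreover have "distinct (map fst ps @ map snd ps)" using h unfolding Wset_def bdist_def by simp
  then have c: "card (set (map fst ps @ map snd ps)) = length (map fst ps @ map snd ps)"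
    by (rule distinct_card)
  have "card (bset ps) = length (map fst ps @ map snd ps)"
    unfolding bset_def set_append[symmetric] by (rule c)
  then show ?thesis using h unfolding Wset_def by simp
qed

lemma Y_sub_X:
  assumes l1: "1 \<le> l" and ln: "3*l+2 \<le> n" and y: "x \<in> Ys n k l"
  shows "Phi x \<in> Xs n k l"
proof -
  obtain ps q where x: "x = (ps, q)" by (cases x)
  have W: "ps \<in> Wset l (bset ps)" and bs: "bset ps \<subseteq> {l+3..n}" and dq: "distinct q"
    and sq: "set q = {l+2..n} - bset ps" and cq: "chn q (k - l)"
    using y unfolding x Ys_def by auto
  have lps: "length ps = l" and srt: "sorted_wrt (>) (map fst ps)" and pr: "\<forall>x\<in>set ps. fst x < snd x"
    and bd: "bdist ps" using W unfolding Wset_def by auto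
  have l2: "l+2 \<in> set q" using sq bs ln by auto
  have hq: "q \<noteq> [] \<and> hd q = l+2" using hd_chn[OF cq sq] l2 sq by auto
  have bgt: "\<forall>x\<in>bset ps. 1 + length ps < x" using bs lps by auto
  have sp: "set (pre 1 ps) = {1..1 + l} \<union> bset ps" using set_pre[of 1 ps] lps by simp
  have dpre: "distinct (pre 1 ps)" using pre_distinct[OF bd bgt] .
  have disj: "set (pre 1 ps) \<inter> set q = {}" using sp sq by auto
  have dp: "distinct (Phi x)" unfolding Phi_def x using dpre dq disj by simp
  have setp: "set (Phi x) = {1..n}" unfolding Phi_def x using sp sq bs ln by auto
  have lenp: "length (Phi x) = n" using distinct_card[OF dp] setp by simp
  have perm: "is_perm n (Phi x)" unfolding is_perm_def using dp setp lenp by simp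
  have fq: "\<forall>x\<in>set ps. hd q < fst x"
  proof
    fix z assume "z \<in> set ps"
    then have "fst z \<in> bset ps" by (auto simp: bset_def)
    then show "hd q < fst z" using hq bs by auto
  qed
  have occ: "\<forall>j<length ps. occ_at (pre 1 ps @ q) (3*j)"
    using occ_pre[OF srt pr] hq bgt fq lps by simp
  have "drop (3*l+1) (Phi x) = q" unfolding Phi_def x using lps by simp
  then show ?thesis unfolding Xs_def using perm occ lps cq unfolding Phi_def x by simp
qed


lemma X_sub_Y:
  assumes l1: "1 \<le> l" and ln: "3*l+2 \<le> n" and px: "p \<in> Xs n k l"
  shows "p \<in> Phi ` Ys n k l"
proof -
  have perm: "is_perm n p" and occ: "\<forall>j<l. occ_at p (3*j)" and ch: "chn (drop (3*l+1) p) (k - l)"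
    using px unfolding Xs_def by auto
  have lp: "length p = n" and sp: "set p = {1..n}" and dp: "distinct p" using perm by (auto simp: is_perm_def)
  note RV = run_values[OF perm l1 occ ch ln]
  have A: "\<forall>j\<le>l. p!(3*j) = j+1" and Yv: "p!(3*l+1) = l+2"
    and B: "\<forall>j<l. l+2 < p!(3*j+1) \<and> p!(3*j+1) < p!(3*j+2)"
    and C: "\<forall>i j. i < j \<and> j < l \<longrightarrow> p!(3*j+1) < p!(3*i+1)" using RV by auto
  define ps where "ps = map (\<lambda>j. (p!(3*j+1), p!(3*j+2))) [0..<l]"
  define q where "q = drop (3*l+1) p"
  have lps: "length ps = l" unfolding ps_def by simp
  have psj: "ps ! j = (p!(3*j+1), p!(3*j+2))" if "j < l" for j unfolding ps_def using that by simp
  have tk: "take (3*l+1) p = pre 1 ps"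
  proof (rule nth_equalityI)
    show "length (take (3*l+1) p) = length (pre 1 ps)" using lp ln lps by simp
    fix i assume "i < length (take (3*l+1) p)"
    then have i: "i < 3*l+1" using lp ln by simp
    define j where "j = i div 3"
    have ij: "i = 3*j + i mod 3" unfolding j_def by simp
    have "i mod 3 = 0 \<or> i mod 3 = 1 \<or> i mod 3 = 2" by auto
    then show "take (3*l+1) p ! i = pre 1 ps ! i"
    proof (elim disjE)
      assume "i mod 3 = 0"
      then have i3: "i = 3*j" using ij by simp
      then have "j \<le> l" using i by simp
      then show ?thesis using A pre_nth_a[of j ps 1] lps i3 i by simp
    next
      assume "i mod 3 = 1"
      then have i3: "i = 3*j+1" using ij by simp
      then have jl: "j < l" using i by simp
      then show ?thesis using pre_nth_b[of j ps 1] lps i3 i psj[OF jl] by simp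
    next
      assume "i mod 3 = 2"
      then have i3: "i = 3*j+2" using ij by simp
      then have jl: "j < l" using i by simp
      then show ?thesis using pre_nth_c[of j ps 1] lps i3 i psj[OF jl] by simp
    qed
  qed
  have pe: "p = Phi (ps, q)" unfolding Phi_def q_def using tk[symmetric] by simp
  have dpre: "distinct (pre 1 ps)" using dp tk by (metis distinct_take)
  have bd: "bdist ps" using pre_distinct_bdist[OF dpre] .
  have srt: "sorted_wrt (>) (map fst ps)"
    unfolding sorted_wrt_iff_nth_less using C lps psj by auto
  have pr: "\<forall>x\<in>set ps. fst x < snd x"
  proof
    fix x assume "x \<in> set ps"
    then obtain j where j: "j < l" "x = ps ! j" using lps by (auto simp: in_set_conv_nth)
    then show "fst x < snd x" using B psj by simp
  qed
  have W: "ps \<in> Wset l (bset ps)" unfolding Wset_def using lps srt pr bd by simp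
  have vals: "p!i \<in> {1..n}" if "i < n" for i using that sp lp nth_mem by blast
  have bs: "bset ps \<subseteq> {l+3..n}"
  proof
    fix x assume "x \<in> bset ps"
    then obtain z where z: "z \<in> set ps" "x = fst z \<or> x = snd z" by (auto simp: bset_def)
    then obtain j where j: "j < l" "z = ps ! j" using lps by (auto simp: in_set_conv_nth)
    have "3*j+2 < n" using j ln by simp
    then have "p!(3*j+1) \<le> n" "p!(3*j+2) \<le> n" using vals[of "3*j+1"] vals[of "3*j+2"] by auto
    then show "x \<in> {l+3..n}" using z j B psj by auto
  qed
  have dq: "distinct q" unfolding q_def using dp by simp
  have spre: "set (pre 1 ps) = {1..1+l} \<union> bset ps" using set_pre[of 1 ps] lps by simp
  have dd: "distinct (pre 1 ps @ q)" using dp pe unfolding Phi_def by simp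
  then have disj: "set (pre 1 ps) \<inter> set q = {}" by simp
  have un: "set (pre 1 ps) \<union> set q = {1..n}" using sp pe unfolding Phi_def by simp
  have sq: "set q = {l+2..n} - bset ps"
  proof -
    have "set q = {1..n} - set (pre 1 ps)" using disj un by blast
    then show ?thesis using spre bs by auto
  qed
  have cq: "chn q (k - l)" using ch q_def by simp
  have "(ps, q) \<in> Ys n k l" unfolding Ys_def using W bs dq sq cq by simp
  then show ?thesis using pe by blast
qed

lemma inj_Phi: "inj_on Phi (Ys n k l)"
proof (rule inj_onI)
  fix x y assume x: "x \<in> Ys n k l" and y: "y \<in> Ys n k l" and e: "Phi x = Phi y"
  obtain ps1 q1 where x1: "x = (ps1, q1)" by (cases x)
  obtain ps2 q2 where y1: "y = (ps2, q2)" by (cases y)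
  have "length ps1 = l" "length ps2 = l" using x y unfolding x1 y1 Ys_def Wset_def by auto
  then have "length (pre 1 ps1) = length (pre 1 ps2)" by simp
  then have "pre 1 ps1 = pre 1 ps2 \<and> q1 = q2" using e unfolding Phi_def x1 y1 by simp
  then show "x = y" using pre_inj x1 y1 by blast
qed


lemma finite_dlists: "finite S \<Longrightarrow> finite {q. distinct q \<and> set q = S \<and> P q}"
proof -
  assume f: "finite S"
  have "{q. distinct q \<and> set q = S \<and> P q} \<subseteq> {xs. set xs \<subseteq> S \<and> length xs = card S}"
    using distinct_card by fastforce
  then show ?thesis using finite_lists_length_eq[OF f] finite_subset by blast
qed

lemma Y_card:
  assumes l1: "1 \<le> l" and ln: "3*l+2 \<le> n"
  shows "card (Ys n k l) = (n - l - 2 choose (2*l)) * dfact_odd l * s (n - 3*l - 1) (k - l)"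
proof -
  define Bs where "Bs = {B. B \<subseteq> {l+3..n} \<and> card B = 2*l}"
  define Q where "Q B = {q. distinct q \<and> set q = {l+2..n} - B \<and> chn q (k - l)}" for B
  have eq: "Ys n k l = (\<Union>B\<in>Bs. Wset l B \<times> Q B)"
  proof (rule set_eqI)
    fix x :: "(nat \<times> nat) list \<times> nat list"
    obtain ps q where x: "x = (ps, q)" by (cases x)
    show "x \<in> Ys n k l \<longleftrightarrow> x \<in> (\<Union>B\<in>Bs. Wset l B \<times> Q B)"
    proof
      assume "x \<in> Ys n k l"
      then have h: "ps \<in> Wset l (bset ps)" "bset ps \<subseteq> {l+3..n}" "q \<in> Q (bset ps)"
        unfolding x Ys_def Q_def by auto
      then have "bset ps \<in> Bs" unfolding Bs_def using bset_card by blast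
      then show "x \<in> (\<Union>B\<in>Bs. Wset l B \<times> Q B)" using h x by blast
    next
      assume "x \<in> (\<Union>B\<in>Bs. Wset l B \<times> Q B)"
      then obtain B where B: "B \<in> Bs" "ps \<in> Wset l B" "q \<in> Q B" unfolding x by blast
      have "bset ps = B" using B(2) unfolding Wset_def by simp
      then show "x \<in> Ys n k l" using B unfolding x Ys_def Q_def Bs_def by auto
    qed
  qed
  have finBs: "finite Bs" unfolding Bs_def
    by (rule finite_subset[of _ "Pow {l+3..n}"]) auto
  have cW: "card (Wset l B) = dfact_odd l" if "B \<in> Bs" for B
    using Wset_card[of B l] that unfolding Bs_def by (auto intro: finite_subset)
  have cQ: "card (Q B) = s (n - 3*l - 1) (k - l)" if "B \<in> Bs" for B
  proof -
    have Bsub: "B \<subseteq> {l+2..n}" "card B = 2*l" using that unfolding Bs_def by auto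
    have fB: "finite B" using Bsub finite_subset by blast
    have "l+2 \<in> {l+2..n} - B" using that ln unfolding Bs_def by auto
    then have ne: "{l+2..n} - B \<noteq> {}" by blast
    have "card ({l+2..n} - B) = card {l+2..n} - card B" using Bsub fB by (simp add: card_Diff_subset)
    then have "card ({l+2..n} - B) = n - 3*l - 1" using Bsub ln by simp
    then show ?thesis unfolding Q_def using cnt_eq[of "{l+2..n} - B" "k - l"] ne by simp
  qed
  have finW: "finite (Wset l B)" if "B \<in> Bs" for B
  proof -
    have "0 < card (Wset l B)" using cW[OF that] dfact_pos by simp
    then show ?thesis by (rule card_ge_0_finite)
  qed
  have finQ: "finite (Q B)" for B unfolding Q_def by (rule finite_dlists) simp
  have "card (Ys n k l) = (\<Sum>B\<in>Bs. card (Wset l B \<times> Q B))"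
    unfolding eq
  proof (rule card_UN_disjoint[OF finBs])
    show "\<forall>B\<in>Bs. finite (Wset l B \<times> Q B)" using finW finQ by blast
    show "\<forall>B\<in>Bs. \<forall>B'\<in>Bs. B \<noteq> B' \<longrightarrow> (Wset l B \<times> Q B) \<inter> (Wset l B' \<times> Q B') = {}"
      unfolding Wset_def by blast
  qed
  also have "\<dots> = (\<Sum>B\<in>Bs. dfact_odd l * s (n - 3*l - 1) (k - l))"
    by (rule sum.cong) (simp_all add: card_cartesian_product cW cQ)
  also have "\<dots> = card Bs * (dfact_odd l * s (n - 3*l - 1) (k - l))" by simp
  also have "card Bs = (n - l - 2 choose (2*l))"
  proof -
    have "card Bs = card {l+3..n} choose (2*l)" unfolding Bs_def by (rule n_subsets) simp
    moreover have "card {l+3..n} = n - l - 2" by simp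
    ultimately show ?thesis by simp
  qed
  finally show ?thesis by (simp add: mult.assoc)
qed


lemma X_card:
  assumes l1: "1 \<le> l" and ln: "3*l+2 \<le> n"
  shows "card (Xs n k l) = (n - l - 2 choose (2*l)) * dfact_odd l * s (n - 3*l - 1) (k - l)"
proof -
  have "Xs n k l = Phi ` Ys n k l"
    using Y_sub_X[OF l1 ln] X_sub_Y[OF l1 ln] by blast
  then have "card (Xs n k l) = card (Ys n k l)" using inj_Phi card_image by metis
  then show ?thesis using Y_card[OF l1 ln] by simp
qed

lemma X_disj:
  assumes l1: "1 \<le> l1" and lt: "l1 < l2" and p1: "p \<in> Xs n k l1" and p2: "p \<in> Xs n k l2"
  shows False
proof -
  have o: "occ_at p (3*l1)" using p2 lt unfolding Xs_def by auto
  have c: "chn (drop (3*l1+1) p) (k - l1)" using p1 unfolding Xs_def by auto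
  show False
  proof (cases "chain (drop (3*l1+1) p) (k - l1)")
    case True
    then have "occ_at (drop (3*l1+1) p) 0" using chain_basic by blast
    then have "occ_at p (Suc (3*l1))" using occ_drop by simp
    then show False using occ_not1[OF o] by simp
  next
    case False
    then have "length (drop (3*l1+1) p) = 1" using c unfolding chn_def by auto
    moreover have "3*l1 + 5 \<le> length p" using occ_len[OF o] .
    ultimately show False by simp
  qed
qed

lemma finite_Xs: "finite (Xs n k l)"
proof -
  have "Xs n k l \<subseteq> {xs. set xs \<subseteq> {1..n} \<and> length xs = n}"
    unfolding Xs_def is_perm_def by auto
  then show ?thesis using finite_lists_length_eq[of "{1..n}" n] finite_subset by blast
qed

theorem theorem3p6:
  shows "(\<forall>n k. 5 \<le> n \<longrightarrow>
            s n k = (\<Sum>l \<in> {l. 5 \<le> 3 * l + 2 \<and> 3 * l + 2 \<le> n}.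
                       (if l \<le> k then (n - l - 2 choose (2 * l)) * dfact_odd l
                                       * s (n - 3 * l - 1) (k - l)
                        else 0)))
       \<and> (\<forall>n k. n < 5 \<longrightarrow> s n k = (if n = 1 \<and> k = 0 then 1 else 0))"
proof (intro conjI allI impI)
  fix n k :: nat assume n5: "n < 5"
  have "{p. is_cluster n k p} = {}" using n5 unfolding is_cluster_def by (auto simp: sigma_def)
  then have "card {p. is_cluster n k p} = 0" by (simp only: card.empty)
  then show "s n k = (if n = 1 \<and> k = 0 then 1 else 0)" unfolding s_def by simp
next
  fix n k :: nat assume n5: "5 \<le> n"
  define L where "L = {l. 5 \<le> 3 * l + 2 \<and> 3 * l + 2 \<le> n}"
  define A where "A l = (if l \<le> k then Xs n k l else {})" for l
  have finL: "finite L" unfolding L_def by (rule finite_subset[of _ "{..n}"]) auto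
  have eq: "{p. is_cluster n k p} = (\<Union>l\<in>L. A l)"
  proof (rule set_eqI)
    fix p
    show "p \<in> {p. is_cluster n k p} \<longleftrightarrow> p \<in> (\<Union>l\<in>L. A l)"
    proof
      assume "p \<in> {p. is_cluster n k p}"
      then have perm: "is_perm n p" and ch: "chain p k"
        using is_cluster_clw clw_chain by auto
      obtain l where l: "1 \<le> l" "l \<le> k" "\<forall>j<l. occ_at p (3*j)" "chn (drop (3*l+1) p) (k - l)"
        using chain_runs[OF ch] by blast
      have "occ_at p (3*(l-1))" using l by simp
      then have "3*(l-1) + 5 \<le> n" using occ_len perm unfolding is_perm_def by fastforce
      then have "l \<in> L" unfolding L_def using l by auto
      moreover have "p \<in> A l" unfolding A_def Xs_def using l perm by simp
      ultimately show "p \<in> (\<Union>l\<in>L. A l)" by blast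
    next
      assume "p \<in> (\<Union>l\<in>L. A l)"
      then obtain l where l: "l \<in> L" "p \<in> A l" by blast
      have lk: "l \<le> k" using l unfolding A_def by (cases "l \<le> k") auto
      then have px: "p \<in> Xs n k l" using l unfolding A_def by simp
      have l1: "1 \<le> l" using l unfolding L_def by simp
      have "chain p k" using runs_chain[OF l1 lk] px unfolding Xs_def by auto
      then show "p \<in> {p. is_cluster n k p}" using px is_cluster_clw chain_clw unfolding Xs_def by auto
    qed
  qed
  have "card {p. is_cluster n k p} = (\<Sum>l\<in>L. card (A l))"
    unfolding eq
  proof (rule card_UN_disjoint[OF finL])
    show "\<forall>l\<in>L. finite (A l)" unfolding A_def using finite_Xs by simp
    show "\<forall>l\<in>L. \<forall>l'\<in>L. l \<noteq> l' \<longrightarrow> A l \<inter> A l' = {}"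
    proof (intro ballI impI)
      fix l l' assume ll: "l \<in> L" "l' \<in> L" "l \<noteq> l'"
      have "1 \<le> l" "1 \<le> l'" using ll unfolding L_def by auto
      show "A l \<inter> A l' = {}"
      proof (rule ccontr)
        assume "A l \<inter> A l' \<noteq> {}"
        then obtain p where p: "p \<in> Xs n k l" "p \<in> Xs n k l'" unfolding A_def
          by (auto split: if_splits)
        show False
        proof (cases "l < l'")
          case True then show False using X_disj \<open>1 \<le> l\<close> p by blast
        next
          case False then have "l' < l" using ll by simp
          then show False using X_disj \<open>1 \<le> l'\<close> p by blast
        qed
      qed
    qed
  qed
  also have "\<dots> = (\<Sum>l\<in>L. (if l \<le> k then (n - l - 2 choose (2 * l)) * dfact_odd l
                                       * s (n - 3 * l - 1) (k - l) else 0))"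
  proof (rule sum.cong)
    fix l assume l: "l \<in> L"
    then have "1 \<le> l" "3*l+2 \<le> n" unfolding L_def by auto
    then show "card (A l) = (if l \<le> k then (n - l - 2 choose (2 * l)) * dfact_odd l
                                       * s (n - 3 * l - 1) (k - l) else 0)"
      unfolding A_def using X_card by simp
  qed simp
  finally show "s n k = (\<Sum>l \<in> {l. 5 \<le> 3 * l + 2 \<and> 3 * l + 2 \<le> n}.
                       (if l \<le> k then (n - l - 2 choose (2 * l)) * dfact_odd l
                                       * s (n - 3 * l - 1) (k - l)
                        else 0))"
    using n5 unfolding s_def L_def by simp
qed

end
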